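(* Let $F_2$ denote the free group of rank 2. Then the direct product $F_2\times F_2$, and hence any group containing a subgroup isomorphic to $F_2\times F_2$, does not embed in $GL(3,\mathbb{F})$ for any field $\mathbb{F}$. *)

theory Defs
  imports "HOL-Analysis.Analysis" "HOL-Algebra.Group"
begin

text \<open>Free group of rank 2, constructed as reduced words. A letter is a pair
  (g, e): g selects one of the two generators, e = True means the inverse of it.\<close>

type_synonym fg_letter = "bool \<times> bool"

definition fg_inv_letter :: "fg_letter \<Rightarrow> fg_letter" where
  "fg_inv_letter x = (fst x, \<not> snd x)"

fun fg_reduced :: "fg_letter list \<Rightarrow> bool" where
  "fg_reduced [] = True"
| "fg_reduced [x] = True"
| "fg_reduced (x # y # r) = (y \<noteq> fg_inv_letter x \<and> fg_reduced (y # r))"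

fun fg_push :: "fg_letter \<Rightarrow> fg_letter list \<Rightarrow> fg_letter list" where
  "fg_push x [] = [x]"
| "fg_push x (y # ys) = (if y = fg_inv_letter x then ys else x # y # ys)"

definition free_group2 :: "fg_letter list monoid" where
  "free_group2 = \<lparr> carrier = {w. fg_reduced w},
                    monoid.mult = (\<lambda>u v. foldr fg_push u v),
                    one = [] \<rparr>"

definition GL3 :: "('a::field ^ 3 ^ 3) monoid" where
  "GL3 = \<lparr> carrier = {A. invertible A}, monoid.mult = (\<lambda>A B. A ** B), one = mat 1 \<rparr>"

end

theory Submission
  imports Defs "HOL-Algebra.Algebraic_Closure_Type"
begin

no_notation fps_nth (infixl "$" 75)


lemma mm3: "((A::'a::semiring_1^3^3) ** B)$i$j = A$i$1 * B$1$j + A$i$2 * B$2$j + A$i$3 * B$3$j"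
  by (simp add: matrix_matrix_mult_def sum_3)

lemma mat3_eq: "(A::'a^3^3) = B \<longleftrightarrow>
  A$1$1 = B$1$1 \<and> A$1$2 = B$1$2 \<and> A$1$3 = B$1$3 \<and>
  A$2$1 = B$2$1 \<and> A$2$2 = B$2$2 \<and> A$2$3 = B$2$3 \<and>
  A$3$1 = B$3$1 \<and> A$3$2 = B$3$2 \<and> A$3$3 = B$3$3"
  by (simp add: vec_eq_iff forall_3)

lemma mat1_entries: "(mat 1 :: 'a::{zero,one}^3^3)$1$1 = 1" "(mat 1 :: 'a::{zero,one}^3^3)$2$2 = 1"
  "(mat 1 :: 'a::{zero,one}^3^3)$3$3 = 1"
  "(mat 1 :: 'a::{zero,one}^3^3)$1$2 = 0" "(mat 1 :: 'a::{zero,one}^3^3)$1$3 = 0"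
  "(mat 1 :: 'a::{zero,one}^3^3)$2$1 = 0" "(mat 1 :: 'a::{zero,one}^3^3)$2$3 = 0"
  "(mat 1 :: 'a::{zero,one}^3^3)$3$1 = 0" "(mat 1 :: 'a::{zero,one}^3^3)$3$2 = 0"
  by (simp_all add: mat_def)

definition ut :: "'a::zero^3^3 \<Rightarrow> bool" where
  "ut T \<longleftrightarrow> T$2$1 = 0 \<and> T$3$1 = 0 \<and> T$3$2 = 0"

definition uni :: "'a::{zero,one}^3^3 \<Rightarrow> bool" where
  "uni T \<longleftrightarrow> ut T \<and> T$1$1 = 1 \<and> T$2$2 = 1 \<and> T$3$3 = 1"

definition cen :: "'a::{zero,one}^3^3 \<Rightarrow> bool" where
  "cen T \<longleftrightarrow> uni T \<and> T$1$2 = 0 \<and> T$2$3 = 0"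

lemma ut_mult: "ut (P::'a::comm_ring_1^3^3) \<Longrightarrow> ut Q \<Longrightarrow> ut (P ** Q) \<and>
   (P**Q)$1$1 = P$1$1 * Q$1$1 \<and> (P**Q)$2$2 = P$2$2 * Q$2$2 \<and> (P**Q)$3$3 = P$3$3 * Q$3$3"
  by (simp add: ut_def mm3)

lemma ut_inv: assumes "ut (T::'a::field^3^3)" "T ** S = mat 1"
  shows "ut S \<and> T$1$1 * S$1$1 = 1 \<and> T$2$2 * S$2$2 = 1 \<and> T$3$3 * S$3$3 = 1"
proof -
  have e: "(T**S)$i$j = (mat 1::'a^3^3)$i$j" for i j using assms(2) by simp
  note E = e[unfolded mm3]
  have t3: "T$3$3 * S$3$3 = 1" using E[of 3 3] assms(1) by (simp add: ut_def mat_def)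
  have s31: "S$3$1 = 0" using E[of 3 1] assms(1) t3 by (auto simp: ut_def mat_def)
  have s32: "S$3$2 = 0" using E[of 3 2] assms(1) t3 by (auto simp: ut_def mat_def)
  have t2: "T$2$2 * S$2$2 = 1" using E[of 2 2] assms(1) s32 by (simp add: ut_def mat_def)
  have s21: "S$2$1 = 0" using E[of 2 1] assms(1) t2 s31 by (auto simp: ut_def mat_def)
  have t1: "T$1$1 * S$1$1 = 1" using E[of 1 1] assms(1) s21 s31 by (simp add: ut_def mat_def)
  show ?thesis using t1 t2 t3 s21 s31 s32 by (simp add: ut_def)
qed

lemma ut_comm_uni:
  fixes P Q :: "'a::field^3^3"
  assumes "ut P" "ut Q" "P ** P' = mat 1" "Q ** Q' = mat 1"
  shows "uni (P ** Q ** P' ** Q')"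
proof -
  from ut_inv[OF assms(1,3)] have p: "ut P'" "P$1$1 * P'$1$1 = 1" "P$2$2 * P'$2$2 = 1" "P$3$3 * P'$3$3 = 1" by auto
  from ut_inv[OF assms(2,4)] have q: "ut Q'" "Q$1$1 * Q'$1$1 = 1" "Q$2$2 * Q'$2$2 = 1" "Q$3$3 * Q'$3$3 = 1" by auto
  have a: "ut (P**Q)" using ut_mult assms by blast
  have b: "ut (P**Q**P')" using ut_mult a p by blast
  show ?thesis using ut_mult[OF b q(1)] ut_mult[OF a p(1)] ut_mult[OF assms(1,2)] p q
    unfolding uni_def by (simp add: algebra_simps)
qed

lemma uni_mult: "uni (P::'a::comm_ring_1^3^3) \<Longrightarrow> uni Q \<Longrightarrow> uni (P ** Q) \<and>
   (P**Q)$1$2 = P$1$2 + Q$1$2 \<and> (P**Q)$2$3 = P$2$3 + Q$2$3"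
  by (simp add: uni_def ut_def mm3)

lemma uni_inv: assumes "uni (P::'a::field^3^3)" "P ** P' = mat 1"
  shows "uni P' \<and> P'$1$2 = - P$1$2 \<and> P'$2$3 = - P$2$3"
proof -
  have u: "uni P'" using ut_inv[of P P'] assms by (simp add: uni_def)
  have "(P ** P')$1$2 = 0" "(P ** P')$2$3 = 0" using assms(2) by (simp_all add: mat_def)
  then show ?thesis using uni_mult[OF assms(1) u] u by (simp add: eq_neg_iff_add_eq_0 add.commute)
qed

lemma uni_comm_cen:
  fixes P Q :: "'a::field^3^3"
  assumes "uni P" "uni Q" "P ** P' = mat 1" "Q ** Q' = mat 1"
  shows "cen (P ** Q ** P' ** Q')"
proof -
  note p = uni_inv[OF assms(1,3)] and q = uni_inv[OF assms(2,4)]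
  have a: "uni (P**Q)" using uni_mult assms by blast
  have b: "uni (P**Q**P')" using uni_mult a p by blast
  show ?thesis using uni_mult[OF b conjunct1[OF q]] uni_mult[OF a conjunct1[OF p]] uni_mult[OF assms(1,2)] p q
    unfolding cen_def by simp
qed

lemma cen_commute: "cen (P::'a::comm_ring_1^3^3) \<Longrightarrow> cen Q \<Longrightarrow> P ** Q = Q ** P"
  by (simp add: cen_def uni_def ut_def mat3_eq mm3 algebra_simps)

lemma cen_comm_one:
  fixes P Q :: "'a::field^3^3"
  assumes "cen P" "cen Q" "P ** P' = mat 1" "Q ** Q' = mat 1"
  shows "P ** Q ** P' ** Q' = mat 1"
proof -
  have "P ** Q ** P' ** Q' = Q ** (P ** P') ** Q'"
    using cen_commute[OF assms(1,2)] by (simp add: matrix_mul_assoc)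
  also have "\<dots> = mat 1" using assms by simp
  finally show ?thesis .
qed


definition adj3 :: "'a::comm_ring_1^3^3 \<Rightarrow> 'a^3^3" where
"adj3 M = vector [vector [M$2$2 * M$3$3 - M$2$3 * M$3$2, M$1$3 * M$3$2 - M$1$2 * M$3$3, M$1$2 * M$2$3 - M$1$3 * M$2$2],
     vector [M$2$3 * M$3$1 - M$2$1 * M$3$3, M$1$1 * M$3$3 - M$1$3 * M$3$1, M$1$3 * M$2$1 - M$1$1 * M$2$3],
     vector [M$2$1 * M$3$2 - M$2$2 * M$3$1, M$1$2 * M$3$1 - M$1$1 * M$3$2, M$1$1 * M$2$2 - M$1$2 * M$2$1]]"

definition tr3 :: "'a::comm_ring_1^3^3 \<Rightarrow> 'a" where "tr3 M = M$1$1 + M$2$2 + M$3$3"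
definition e2 :: "'a::comm_ring_1^3^3 \<Rightarrow> 'a" where
  "e2 M = (M$1$1 * M$2$2 - M$1$2 * M$2$1) + (M$1$1 * M$3$3 - M$1$3 * M$3$1) + (M$2$2 * M$3$3 - M$2$3 * M$3$2)"

lemma mat_entries3: "(mat c :: 'a::zero^3^3)$i$j = (if i = j then c else 0)"
  by (simp add: mat_def)

lemma adj3_poly: "adj3 (M::'a::comm_ring_1^3^3) = M ** M - mat (tr3 M) ** M + mat (e2 M)"
  by (simp add: mat3_eq adj3_def mm3 tr3_def e2_def mat_def algebra_simps)

lemma adj3_adj3: "adj3 (adj3 (M::'a::comm_ring_1^3^3)) = mat (det M) ** M"
  unfolding mat3_eq adj3_def by (simp add: mm3 det_3 mat_def algebra_simps)

lemma comm_sub: "(Z::'a::comm_ring_1^'n^'n) ** A = A ** Z \<Longrightarrow> Z ** B = B ** Z \<Longrightarrow> Z ** (A - B) = (A - B) ** Z"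
  by (simp add: vec_eq_iff matrix_matrix_mult_def algebra_simps sum_subtractf)

lemma comm_add: "(Z::'a::comm_ring_1^'n^'n) ** A = A ** Z \<Longrightarrow> Z ** B = B ** Z \<Longrightarrow> Z ** (A + B) = (A + B) ** Z"
  by (simp add: matrix_add_ldistrib vec_eq_iff matrix_matrix_mult_def algebra_simps sum.distrib)

lemma comm_mat: "(Z::'a::comm_ring_1^'n^'n) ** mat c = mat c ** Z"
  by (simp add: vec_eq_iff matrix_matrix_mult_def mat_def if_distrib if_distribR mult.commute cong: if_cong)

lemma comm_mul: "(Z::'a::comm_ring_1^'n^'n) ** A = A ** Z \<Longrightarrow> Z ** B = B ** Z \<Longrightarrow> Z ** (A ** B) = (A ** B) ** Z"
  by (metis matrix_mul_assoc)

lemma comm_adj3: "(Z::'a::comm_ring_1^3^3) ** M = M ** Z \<Longrightarrow> Z ** adj3 M = adj3 M ** Z"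
  unfolding adj3_poly by (intro comm_add comm_sub comm_mul comm_mat)

lemma adj3_minor:
  assumes "adj3 (N::'a::comm_ring_1^3^3) = 0"
  shows "N$i$j * N$k$l = N$i$l * N$k$j"
proof -
  have e: "adj3 N $ p $ q = 0" for p q using assms by simp
  note E = e[unfolded adj3_def, simplified]
  have "\<forall>i j k l. N$i$j * N$k$l = N$i$l * N$k$j"
    using E[of 1 1] E[of 1 2] E[of 1 3] E[of 2 1] E[of 2 2] E[of 2 3] E[of 3 1] E[of 3 2] E[of 3 3]
    unfolding forall_3 by (simp add: algebra_simps)
  then show ?thesis by blast
qed


lemma eigen3: "\<exists>t. det ((Xm::'k::alg_closed_field^3^3) - mat t) = 0"
proof -
  define f where "f = (\<lambda>k::nat. if k = 0 then det Xm else if k = 1 then - e2 Xm else if k = 2 then tr3 Xm else -1)"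
  obtain t where t: "(\<Sum>k\<le>3. f k * t ^ k) = 0"
    using alg_closed[of 3 f] by (auto simp: f_def)
  have "(\<Sum>k\<le>3. f k * t ^ k) = det Xm - e2 Xm * t + tr3 Xm * t^2 - t^3"
    by (simp add: f_def numeral_3_eq_3 numeral_2_eq_2 atMost_Suc power2_eq_square power3_eq_cube)
  also have "\<dots> = det (Xm - mat t)"
    by (simp add: det_3 mat_def e2_def tr3_def power2_eq_square power3_eq_cube algebra_simps)
  finally show ?thesis using t by auto
qed

lemma root2: "\<exists>t::'k::alg_closed_field. t * t - s * t + p = 0"
proof -
  define f where "f = (\<lambda>k::nat. if k = 0 then p else if k = 1 then - s else 1)"
  obtain t where t: "(\<Sum>k\<le>2. f k * t ^ k) = 0"
    using alg_closed[of 2 f] by (auto simp: f_def)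
  have "(\<Sum>k\<le>2. f k * t ^ k) = t * t - s * t + p"
    by (simp add: f_def numeral_2_eq_2 atMost_Suc power2_eq_square algebra_simps)
  then show ?thesis using t by auto
qed

definition outer :: "'a::times^'n \<Rightarrow> 'a^'m \<Rightarrow> 'a^'m^'n" where
  "outer u f = (\<chi> k l. u$k * f$l)"

lemma outer_mult_l: "((C::'a::comm_semiring_1^'n^'m) ** outer u f)$k$j = (C *v u)$k * f$j"
proof -
  have "((C::'a::comm_semiring_1^'n^'m) ** outer u f)$k$j = (\<Sum>m\<in>UNIV. C$k$m * u$m * f$j)"
    by (simp add: matrix_matrix_mult_def outer_def mult.assoc)
  also have "\<dots> = (C *v u)$k * f$j" by (simp add: matrix_vector_mult_def sum_distrib_right)
  finally show ?thesis .
qed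

lemma outer_mult_r: "(outer u f ** (C::'a::comm_semiring_1^'n^'m))$k$j = u$k * (f v* C)$j"
proof -
  have "(outer u f ** C)$k$j = (\<Sum>m\<in>UNIV. u$k * (f$m * C$m$j))"
    by (simp add: matrix_matrix_mult_def outer_def ac_simps)
  also have "\<dots> = u$k * (f v* C)$j" by (simp add: vector_matrix_mult_def sum_distrib_left ac_simps)
  finally show ?thesis .
qed

lemma rank_one:
  assumes "adj3 (N::'k::field^3^3) = 0" "N \<noteq> 0"
  shows "\<exists>u f. u \<noteq> 0 \<and> f \<noteq> 0 \<and> N = outer u f"
proof -
  obtain i j where ij: "N$i$j \<noteq> 0" using assms(2) by (auto simp: vec_eq_iff)
  define u where "u = (\<chi> k. N$k$j)"
  define f where "f = (\<chi> l. N$i$l / N$i$j)"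
  have "u$i \<noteq> 0" using ij by (simp add: u_def)
  then have "u \<noteq> 0" by auto
  moreover have "f$j \<noteq> 0" using ij by (simp add: f_def)
  then have "f \<noteq> 0" by auto
  moreover have "N = outer u f"
  proof -
    have h: "N$k$j * N$i$l / N$i$j = N$k$l" for k l
      using adj3_minor[OF assms(1), of i j k l] ij by (simp add: field_simps)
    show ?thesis by (simp add: vec_eq_iff outer_def u_def f_def h)
  qed
  ultimately show ?thesis by blast
qed

lemma outer_common:
  fixes C :: "'k::field^'n^'n"
  assumes "f \<noteq> 0" "C ** outer u f = outer u f ** C"
  shows "\<exists>\<mu>. C *v u = \<mu> *s u"
proof -
  obtain j where j: "f$j \<noteq> 0" using assms(1) by (auto simp: vec_eq_iff)
  have "(C ** outer u f)$k$j = (outer u f ** C)$k$j" for k using assms(2) by simp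
  then have "(C *v u)$k * f$j = u$k * (f v* C)$j" for k
    by (simp add: outer_mult_l outer_mult_r)
  then have "(C *v u)$k = ((f v* C)$j / f$j) * u$k" for k using j by (simp add: field_simps)
  then have "C *v u = ((f v* C)$j / f$j) *s u" by (simp add: vec_eq_iff)
  then show ?thesis by blast
qed

lemma outer_common_left:
  fixes C :: "'k::field^'n^'n"
  assumes "u \<noteq> 0" "C ** outer u f = outer u f ** C"
  shows "\<exists>\<nu>. f v* C = \<nu> *s f"
proof -
  obtain i where i: "u$i \<noteq> 0" using assms(1) by (auto simp: vec_eq_iff)
  have "(C ** outer u f)$i$l = (outer u f ** C)$i$l" for l using assms(2) by simp
  then have "(C *v u)$i * f$l = u$i * (f v* C)$l" for l
    by (simp add: outer_mult_l outer_mult_r)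
  then have "(f v* C)$l = ((C *v u)$i / u$i) * f$l" for l using i by (simp add: field_simps)
  then have "f v* C = ((C *v u)$i / u$i) *s f" by (simp add: vec_eq_iff)
  then show ?thesis by blast
qed

lemma rank1_commutant:
  fixes Xm :: "'k::alg_closed_field^3^3"
  assumes "\<forall>c. Xm \<noteq> mat c"
  shows "\<exists>u f. u \<noteq> 0 \<and> f \<noteq> 0 \<and> (\<forall>Z. Z ** Xm = Xm ** Z \<longrightarrow> Z ** outer u f = outer u f ** Z)"
proof -
  obtain t where t: "det (Xm - mat t) = 0" using eigen3 by blast
  define M where "M = Xm - mat t"
  have M0: "M \<noteq> 0" using assms by (auto simp: M_def)
  have cM: "Z ** M = M ** Z" if "Z ** Xm = Xm ** Z" for Z
    unfolding M_def by (rule comm_sub[OF that comm_mat])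
  show ?thesis
  proof (cases "adj3 M = 0")
    case True
    then obtain u f where uf: "u \<noteq> 0" "f \<noteq> 0" "M = outer u f" using rank_one[OF _ M0] by blast
    have "\<forall>Z. Z ** Xm = Xm ** Z \<longrightarrow> Z ** outer u f = outer u f ** Z" using cM uf(3) by simp
    then show ?thesis using uf(1,2) by blast
  next
    case False
    have "adj3 (adj3 M) = 0" using adj3_adj3[of M] t by (simp add: M_def)
    then obtain u f where uf: "u \<noteq> 0" "f \<noteq> 0" "adj3 M = outer u f" using rank_one[OF _ False] by blast
    have "\<forall>Z. Z ** Xm = Xm ** Z \<longrightarrow> Z ** outer u f = outer u f ** Z"
      using cM comm_adj3 uf(3) by metis
    then show ?thesis using uf(1,2) by blast
  qed
qed


definition dotv :: "'a::semiring_1^'n \<Rightarrow> 'a^'n \<Rightarrow> 'a" where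
  "dotv f u = (\<Sum>i\<in>UNIV. f$i * u$i)"

lemma vm3: "((f::'a::comm_semiring_1^3) v* (Q::'a^3^3))$j = f$1 * Q$1$j + f$2 * Q$2$j + f$3 * Q$3$j"
  by (simp add: vector_matrix_mult_def sum_3 mult.commute)

lemma mv3: "((Q::'a::comm_semiring_1^3^3) *v u)$i = Q$i$1 * u$1 + Q$i$2 * u$2 + Q$i$3 * u$3"
  by (simp add: matrix_vector_mult_def sum_3)

lemma dot3: "dotv (f::'a::semiring_1^3) u = f$1 * u$1 + f$2 * u$2 + f$3 * u$3"
  by (simp add: dotv_def sum_3)

lemma nonzero3: "(v::'a::zero^3) \<noteq> 0 \<Longrightarrow> v$1 \<noteq> 0 \<or> v$2 \<noteq> 0 \<or> v$3 \<noteq> 0"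
  by (auto simp: vec_eq_iff forall_3)

lemma Qex1:
  fixes u f :: "'k::field^3"
  assumes "f \<noteq> 0" "dotv f u \<noteq> 0"
  shows "\<exists>Q::'k^3^3. invertible Q \<and> (\<forall>i. Q$i$1 = u$i) \<and> (f v* Q)$2 = 0 \<and> (f v* Q)$3 = 0"
proof -
  have d: "f$1 * u$1 + f$2 * u$2 + f$3 * u$3 \<noteq> 0" using assms(2) by (simp add: dot3)
  have all: "(\<forall>i. Q$i$1 = u$i) \<longleftrightarrow> Q$1$1 = u$1 \<and> Q$2$1 = u$2 \<and> Q$3$1 = u$3" for Q :: "'k^3^3"
    by (simp add: forall_3)
  consider "f$1 \<noteq> 0" | "f$2 \<noteq> 0" | "f$3 \<noteq> 0" using nonzero3[OF assms(1)] by blast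
  then show ?thesis
  proof cases
    case 1
    define Q :: "'k^3^3" where "Q = vector [vector [u$1, - f$2, - f$3], vector [u$2, f$1, 0], vector [u$3, 0, f$1]]"
    have "det Q = f$1 * (f$1 * u$1 + f$2 * u$2 + f$3 * u$3)"
      by (simp add: Q_def det_3 algebra_simps)
    then have "invertible Q" using 1 d by (simp add: invertible_det_nz)
    moreover have "(\<forall>i. Q$i$1 = u$i) \<and> (f v* Q)$2 = 0 \<and> (f v* Q)$3 = 0"
      by (simp add: all vm3 Q_def algebra_simps)
    ultimately show ?thesis by blast
  next
    case 2
    define Q :: "'k^3^3" where "Q = vector [vector [u$1, f$2, 0], vector [u$2, - f$1, - f$3], vector [u$3, 0, f$2]]"
    have "det Q = - f$2 * (f$1 * u$1 + f$2 * u$2 + f$3 * u$3)"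
      by (simp add: Q_def det_3 algebra_simps)
    then have "invertible Q" using 2 d by (simp add: invertible_det_nz)
    moreover have "(\<forall>i. Q$i$1 = u$i) \<and> (f v* Q)$2 = 0 \<and> (f v* Q)$3 = 0"
      by (simp add: all vm3 Q_def algebra_simps)
    ultimately show ?thesis by blast
  next
    case 3
    define Q :: "'k^3^3" where "Q = vector [vector [u$1, f$3, 0], vector [u$2, 0, f$3], vector [u$3, - f$1, - f$2]]"
    have "det Q = f$3 * (f$1 * u$1 + f$2 * u$2 + f$3 * u$3)"
      by (simp add: Q_def det_3 algebra_simps)
    then have "invertible Q" using 3 d by (simp add: invertible_det_nz)
    moreover have "(\<forall>i. Q$i$1 = u$i) \<and> (f v* Q)$2 = 0 \<and> (f v* Q)$3 = 0"
      by (simp add: all vm3 Q_def algebra_simps)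
    ultimately show ?thesis by blast
  qed
qed


lemma Qex2:
  fixes u f :: "'k::field^3"
  assumes "f \<noteq> 0" "u \<noteq> 0" "dotv f u = 0"
  shows "\<exists>Q::'k^3^3. invertible Q \<and> (\<forall>i. Q$i$1 = u$i) \<and> (f v* Q)$2 = 0"
proof -
  have d: "f$1 * u$1 + f$2 * u$2 + f$3 * u$3 = 0" using assms(3) by (simp add: dot3)
  have all: "(\<forall>i. Q$i$1 = u$i) \<longleftrightarrow> Q$1$1 = u$1 \<and> Q$2$1 = u$2 \<and> Q$3$1 = u$3" for Q :: "'k^3^3"
    by (simp add: forall_3)
  have u: "u$1 \<noteq> 0 \<or> u$2 \<noteq> 0 \<or> u$3 \<noteq> 0" using nonzero3[OF assms(2)] .
  have c0: "f$1 \<noteq> 0 \<Longrightarrow> u$3 \<noteq> 0 \<Longrightarrow> ?thesis"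
  proof -
    assume h: "f$1 \<noteq> 0" "u$3 \<noteq> 0"
    define Q :: "'k^3^3" where "Q = vector [vector [u$1, - f$2, 1], vector [u$2, f$1, 0], vector [u$3, 0, 0]]"
    have "det Q \<noteq> 0" using h by (simp add: Q_def det_3)
    moreover have "(\<forall>i. Q$i$1 = u$i) \<and> (f v* Q)$2 = 0"
      by (simp add: all vm3 Q_def algebra_simps)
    ultimately show ?thesis by (auto simp: invertible_det_nz)
  qed
  have c1: "f$1 \<noteq> 0 \<Longrightarrow> u$2 \<noteq> 0 \<Longrightarrow> ?thesis"
  proof -
    assume h: "f$1 \<noteq> 0" "u$2 \<noteq> 0"
    define Q :: "'k^3^3" where "Q = vector [vector [u$1, - f$3, 1], vector [u$2, 0, 0], vector [u$3, f$1, 0]]"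
    have "det Q \<noteq> 0" using h by (simp add: Q_def det_3)
    moreover have "(\<forall>i. Q$i$1 = u$i) \<and> (f v* Q)$2 = 0"
      by (simp add: all vm3 Q_def algebra_simps)
    ultimately show ?thesis by (auto simp: invertible_det_nz)
  qed
  have c2: "f$2 \<noteq> 0 \<Longrightarrow> u$3 \<noteq> 0 \<Longrightarrow> ?thesis"
  proof -
    assume h: "f$2 \<noteq> 0" "u$3 \<noteq> 0"
    define Q :: "'k^3^3" where "Q = vector [vector [u$1, f$2, 0], vector [u$2, - f$1, 1], vector [u$3, 0, 0]]"
    have "det Q \<noteq> 0" using h by (simp add: Q_def det_3)
    moreover have "(\<forall>i. Q$i$1 = u$i) \<and> (f v* Q)$2 = 0"
      by (simp add: all vm3 Q_def algebra_simps)
    ultimately show ?thesis by (auto simp: invertible_det_nz)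
  qed
  have c3: "f$2 \<noteq> 0 \<Longrightarrow> u$1 \<noteq> 0 \<Longrightarrow> ?thesis"
  proof -
    assume h: "f$2 \<noteq> 0" "u$1 \<noteq> 0"
    define Q :: "'k^3^3" where "Q = vector [vector [u$1, 0, 0], vector [u$2, - f$3, 1], vector [u$3, f$2, 0]]"
    have "det Q \<noteq> 0" using h by (simp add: Q_def det_3)
    moreover have "(\<forall>i. Q$i$1 = u$i) \<and> (f v* Q)$2 = 0"
      by (simp add: all vm3 Q_def algebra_simps)
    ultimately show ?thesis by (auto simp: invertible_det_nz)
  qed
  have c4: "f$3 \<noteq> 0 \<Longrightarrow> u$2 \<noteq> 0 \<Longrightarrow> ?thesis"
  proof -
    assume h: "f$3 \<noteq> 0" "u$2 \<noteq> 0"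
    define Q :: "'k^3^3" where "Q = vector [vector [u$1, f$3, 0], vector [u$2, 0, 0], vector [u$3, - f$1, 1]]"
    have "det Q \<noteq> 0" using h by (simp add: Q_def det_3)
    moreover have "(\<forall>i. Q$i$1 = u$i) \<and> (f v* Q)$2 = 0"
      by (simp add: all vm3 Q_def algebra_simps)
    ultimately show ?thesis by (auto simp: invertible_det_nz)
  qed
  have c5: "f$3 \<noteq> 0 \<Longrightarrow> u$1 \<noteq> 0 \<Longrightarrow> ?thesis"
  proof -
    assume h: "f$3 \<noteq> 0" "u$1 \<noteq> 0"
    define Q :: "'k^3^3" where "Q = vector [vector [u$1, 0, 0], vector [u$2, f$3, 0], vector [u$3, - f$2, 1]]"
    have "det Q \<noteq> 0" using h by (simp add: Q_def det_3)
    moreover have "(\<forall>i. Q$i$1 = u$i) \<and> (f v* Q)$2 = 0"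
      by (simp add: all vm3 Q_def algebra_simps)
    ultimately show ?thesis by (auto simp: invertible_det_nz)
  qed
  have "f$1 \<noteq> 0 \<or> f$2 \<noteq> 0 \<or> f$3 \<noteq> 0" using nonzero3[OF assms(1)] .
  moreover have "f$1 \<noteq> 0 \<Longrightarrow> u$2 = 0 \<Longrightarrow> u$3 = 0 \<Longrightarrow> False" using d u by auto
  moreover have "f$2 \<noteq> 0 \<Longrightarrow> u$1 = 0 \<Longrightarrow> u$3 = 0 \<Longrightarrow> False" using d u by auto
  moreover have "f$3 \<noteq> 0 \<Longrightarrow> u$1 = 0 \<Longrightarrow> u$2 = 0 \<Longrightarrow> False" using d u by auto
  ultimately show ?thesis using c0 c1 c2 c3 c4 c5 by blast
qed


lemma axis1_col: "((A::'a::comm_semiring_1^3^3) *v axis 1 1)$i = A$i$1"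
  by (simp add: mv3 axis_def)

lemma conj_col1:
  fixes Q R G :: "'k::field^3^3"
  assumes "R ** Q = mat 1" "\<forall>i. Q$i$1 = u$i" "G *v u = \<mu> *s u"
  shows "(R ** G ** Q)$2$1 = 0 \<and> (R ** G ** Q)$3$1 = 0 \<and> (R ** G ** Q)$1$1 = \<mu>"
proof -
  have qe: "Q *v axis 1 1 = u" using assms(2) by (simp add: vec_eq_iff axis1_col)
  have "(R ** G ** Q) *v axis 1 1 = R *v (G *v (Q *v axis 1 1))"
    by (simp add: matrix_vector_mul_assoc matrix_mul_assoc)
  also have "\<dots> = \<mu> *s (R *v (Q *v axis 1 1))" using qe assms(3) by (simp add: vector_scalar_commute)
  also have "\<dots> = \<mu> *s axis 1 1" using assms(1) by (simp add: matrix_vector_mul_assoc)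
  finally have e: "(R ** G ** Q) *v axis 1 1 = \<mu> *s axis 1 1" .
  have "((R ** G ** Q) *v axis 1 1)$i = (\<mu> *s axis 1 (1::'k))$i" for i using e by simp
  then show ?thesis unfolding axis1_col by (auto simp: axis_def)
qed

lemma conj_row:
  fixes Q R G :: "'k::field^3^3"
  assumes "Q ** R = mat 1" "f v* G = \<nu> *s f"
  shows "(f v* Q) v* (R ** G ** Q) = \<nu> *s (f v* Q)"
proof -
  have "Q ** (R ** G ** Q) = G ** Q" using assms(1) by (simp add: matrix_mul_assoc)
  then have "(f v* Q) v* (R ** G ** Q) = f v* (G ** Q)" by (simp add: vector_matrix_mul_assoc)
  also have "\<dots> = \<nu> *s (f v* Q)" using assms(2)
    by (simp add: vector_matrix_mul_assoc[symmetric] scalar_vector_matrix_assoc)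
  finally show ?thesis .
qed

lemma row_e3:
  fixes G :: "'k::field^3^3"
  assumes "g$1 = 0" "g$2 = 0" "g$3 \<noteq> 0" "g v* G = \<nu> *s g"
  shows "G$3$1 = 0 \<and> G$3$2 = 0"
proof -
  have "(g v* G)$j = (\<nu> *s g)$j" for j using assms(4) by simp
  from this[of 1] this[of 2] show ?thesis using assms(1-3) by (simp add: vm3)
qed

lemma row_e1:
  fixes G :: "'k::field^3^3"
  assumes "g$2 = 0" "g$3 = 0" "g$1 \<noteq> 0" "g v* G = \<nu> *s g"
  shows "G$1$2 = 0 \<and> G$1$3 = 0 \<and> G$1$1 = \<nu>"
proof -
  have "(g v* G)$j = (\<nu> *s g)$j" for j using assms(4) by simp
  from this[of 1] this[of 2] this[of 3] show ?thesis using assms(1-3) by (simp add: vm3)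
qed

lemma vQ_nonzero:
  fixes Q R :: "'k::field^3^3"
  assumes "Q ** R = mat 1" "f \<noteq> 0"
  shows "f v* Q \<noteq> 0"
proof
  assume "f v* Q = 0"
  then have "(f v* Q) v* R = 0" by simp
  then show False using assms by (simp add: vector_matrix_mul_assoc)
qed

lemma vQ_col1: "(\<forall>i. (Q::'a::comm_semiring_1^3^3)$i$1 = u$i) \<Longrightarrow> ((f::'a^3) v* Q)$1 = dotv f u"
  by (simp add: vm3 dot3)

definition TP :: "'k::field^3^3 \<Rightarrow> 'k^3^3 \<Rightarrow> bool" where
  "TP C D \<longleftrightarrow> (\<exists>Q R. Q ** R = mat 1 \<and> R ** Q = mat 1 \<and> ut (R ** C ** Q) \<and> ut (R ** D ** Q))"

lemma flag:
  fixes C D :: "'k::field^3^3"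
  assumes "u \<noteq> 0" "f \<noteq> 0" "dotv f u = 0"
    "C *v u = \<mu>1 *s u" "f v* C = \<nu>1 *s f" "D *v u = \<mu>2 *s u" "f v* D = \<nu>2 *s f"
  shows "TP C D"
proof -
  obtain Q :: "'k^3^3" where Q: "invertible Q" "\<forall>i. Q$i$1 = u$i" "(f v* Q)$2 = 0"
    using Qex2[OF assms(2,1,3)] by blast
  obtain R where R: "Q ** R = mat 1" "R ** Q = mat 1" using Q(1) unfolding invertible_def by blast
  have g1: "(f v* Q)$1 = 0" using vQ_col1[OF Q(2)] assms(3) by simp
  have g3: "(f v* Q)$3 \<noteq> 0" using vQ_nonzero[OF R(1) assms(2)] g1 Q(3) by (auto simp: vec_eq_iff forall_3)
  have "ut (R ** G ** Q)" if "G *v u = \<mu> *s u" "f v* G = \<nu> *s f" for G \<mu> \<nu>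
    using conj_col1[OF R(2) Q(2) that(1)] row_e3[OF g1 Q(3) g3 conj_row[OF R(1) that(2)]]
    by (simp add: ut_def)
  then show ?thesis unfolding TP_def using R assms(4-7) by blast
qed


lemma perp2:
  fixes a b x y :: "'k::field"
  assumes "a \<noteq> 0 \<or> b \<noteq> 0" "a * x + b * y = 0"
  shows "\<exists>t. x = t * b \<and> y = - (t * a)"
proof (cases "a = 0")
  case True
  then have "b \<noteq> 0" using assms(1) by simp
  then show ?thesis using assms(2) True by (intro exI[of _ "x / b"]) (simp add: field_simps)
next
  case False
  then show ?thesis using assms(2) by (intro exI[of _ "- y / a"]) (simp add: field_simps, Groebner_Basis.algebra)
qed

lemma perp_ev:
  fixes G :: "'k::field^3^3"
  assumes "G$1$2 = 0" "G$1$3 = 0" "a \<noteq> 0 \<or> b \<noteq> 0"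
    "a * (G$2$2 * b - G$2$3 * a) + b * (G$3$2 * b - G$3$3 * a) = 0"
  shows "\<exists>t. G *v vector [0, b, -a] = t *s vector [0, b, -a]"
proof -
  obtain t where t: "G$2$2 * b - G$2$3 * a = t * b" "G$3$2 * b - G$3$3 * a = - (t * a)"
    using perp2[OF assms(3,4)] by blast
  have "G *v vector [0, b, -a] = t *s vector [0, b, -a]"
    using t assms(1,2) by (simp add: vec_eq_iff forall_3 mv3 algebra_simps)
  then show ?thesis by blast
qed

lemma vec0ba: "(a::'k::field) \<noteq> 0 \<or> b \<noteq> 0 \<Longrightarrow> (vector [0, b, -a] :: 'k^3) \<noteq> 0 \<and> (vector [0, b, -a] :: 'k^3)$1 = 0"
  by (auto simp: vec_eq_iff forall_3)

lemma block_case: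
  fixes C D Z :: "'k::alg_closed_field^3^3"
  assumes pC: "C$1$2 = 0" "C$1$3 = 0" "C$2$1 = 0" "C$3$1 = 0"
    and pD: "D$1$2 = 0" "D$1$3 = 0" "D$2$1 = 0" "D$3$1 = 0"
    and cC: "Z ** C = C ** Z" and cD: "Z ** D = D ** Z"
    and NE: "\<not> (\<exists>w. w \<noteq> 0 \<and> w$1 = 0 \<and> (\<exists>a. C *v w = a *s w) \<and> (\<exists>b. D *v w = b *s w))"
  shows "Z$1$2 = 0 \<and> Z$1$3 = 0 \<and> Z$2$1 = 0 \<and> Z$3$1 = 0 \<and> Z$2$3 = 0 \<and> Z$3$2 = 0 \<and> Z$2$2 = Z$3$3"
proof -
  have eC: "(Z ** C)$i$j = (C ** Z)$i$j" for i j using cC by simp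
  have eD: "(Z ** D)$i$j = (D ** Z)$i$j" for i j using cD by simp
  note EC = eC[unfolded mm3] and ED = eD[unfolded mm3]
  have s: "Z$2$1 = 0 \<and> Z$3$1 = 0"
  proof (rule ccontr)
    assume ne: "\<not> ?thesis"
    define w :: "'k^3" where "w = vector [0, Z$2$1, Z$3$1]"
    have "w \<noteq> 0" "w$1 = 0" using ne by (auto simp: w_def vec_eq_iff forall_3)
    moreover have "C *v w = C$1$1 *s w"
      using EC[of 2 1] EC[of 3 1] pC by (simp add: w_def vec_eq_iff forall_3 mv3 algebra_simps)
    moreover have "D *v w = D$1$1 *s w"
      using ED[of 2 1] ED[of 3 1] pD by (simp add: w_def vec_eq_iff forall_3 mv3 algebra_simps)
    ultimately show False using NE by blast
  qed
  have r: "Z$1$2 = 0 \<and> Z$1$3 = 0"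
  proof (rule ccontr)
    assume ne: "\<not> ?thesis"
    then have ab: "Z$1$2 \<noteq> 0 \<or> Z$1$3 \<noteq> 0" by blast
    have "\<exists>t. C *v vector [0, Z$1$3, - Z$1$2] = t *s vector [0, Z$1$3, - Z$1$2]"
      using EC[of 1 2] EC[of 1 3] pC by (intro perp_ev[OF pC(1,2) ab]) (simp, Groebner_Basis.algebra)
    moreover have "\<exists>t. D *v vector [0, Z$1$3, - Z$1$2] = t *s vector [0, Z$1$3, - Z$1$2]"
      using ED[of 1 2] ED[of 1 3] pD by (intro perp_ev[OF pD(1,2) ab]) (simp, Groebner_Basis.algebra)
    ultimately show False using NE vec0ba[OF ab] by blast
  qed
  \<comment> \<open>Schur on the 2x2 block\<close>
  obtain \<tau> where tau: "\<tau> * \<tau> - (Z$2$2 + Z$3$3) * \<tau> + (Z$2$2 * Z$3$3 - Z$2$3 * Z$3$2) = 0"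
    using root2 by blast
  have sch: "Z$2$2 - \<tau> = 0 \<and> Z$2$3 = 0 \<and> Z$3$2 = 0 \<and> Z$3$3 - \<tau> = 0"
  proof (rule ccontr)
    assume ne: "\<not> ?thesis"
    show False
    proof (cases "Z$2$2 - \<tau> \<noteq> 0 \<or> Z$2$3 \<noteq> 0")
      case True
      have "\<exists>t. C *v vector [0, Z$2$3, - (Z$2$2 - \<tau>)] = t *s vector [0, Z$2$3, - (Z$2$2 - \<tau>)]"
        using EC[of 2 2] EC[of 2 3] EC[of 3 2] EC[of 3 3] pC tau
        by (intro perp_ev[OF pC(1,2) True]) (simp, Groebner_Basis.algebra)
      moreover have "\<exists>t. D *v vector [0, Z$2$3, - (Z$2$2 - \<tau>)] = t *s vector [0, Z$2$3, - (Z$2$2 - \<tau>)]"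
        using ED[of 2 2] ED[of 2 3] ED[of 3 2] ED[of 3 3] pD tau
        by (intro perp_ev[OF pD(1,2) True]) (simp, Groebner_Basis.algebra)
      ultimately show False using NE vec0ba[OF True] by blast
    next
      case False
      then have F: "Z$3$2 \<noteq> 0 \<or> Z$3$3 - \<tau> \<noteq> 0" using ne by auto
      have "\<exists>t. C *v vector [0, Z$3$3 - \<tau>, - Z$3$2] = t *s vector [0, Z$3$3 - \<tau>, - Z$3$2]"
        using EC[of 2 2] EC[of 2 3] EC[of 3 2] EC[of 3 3] pC tau
        by (intro perp_ev[OF pC(1,2) F]) (simp, Groebner_Basis.algebra)
      moreover have "\<exists>t. D *v vector [0, Z$3$3 - \<tau>, - Z$3$2] = t *s vector [0, Z$3$3 - \<tau>, - Z$3$2]"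
        using ED[of 2 2] ED[of 2 3] ED[of 3 2] ED[of 3 3] pD tau
        by (intro perp_ev[OF pD(1,2) F]) (simp, Groebner_Basis.algebra)
      ultimately show False using NE vec0ba[OF F] by blast
    qed
  qed
  show ?thesis using s r sch by simp
qed


lemma conj_mult:
  fixes Q R A B :: "'k::field^3^3"
  assumes "Q ** R = mat 1"
  shows "(R ** A ** Q) ** (R ** B ** Q) = R ** (A ** B) ** Q"
proof -
  have "(R ** A ** Q) ** (R ** B ** Q) = R ** A ** (Q ** R) ** B ** Q" by (simp add: matrix_mul_assoc)
  then show ?thesis using assms by (simp add: matrix_mul_assoc)
qed

lemma unconj:
  fixes Q R A :: "'k::field^3^3"
  assumes "Q ** R = mat 1"
  shows "Q ** (R ** A ** Q) ** R = A"
proof -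
  have "Q ** (R ** A ** Q) ** R = (Q ** R) ** A ** (Q ** R)" by (simp add: matrix_mul_assoc)
  then show ?thesis using assms by simp
qed

lemma TP_conj:
  fixes Q R C D :: "'k::field^3^3"
  assumes "Q ** R = mat 1" "R ** Q = mat 1" "TP (R ** C ** Q) (R ** D ** Q)"
  shows "TP C D"
proof -
  obtain Q2 R2 where h: "Q2 ** R2 = mat 1" "R2 ** Q2 = mat 1" "ut (R2 ** (R ** C ** Q) ** Q2)"
     "ut (R2 ** (R ** D ** Q) ** Q2)" using assms(3) unfolding TP_def by blast
  have e: "R2 ** (R ** G ** Q) ** Q2 = (R2 ** R) ** G ** (Q ** Q2)" for G :: "'k^3^3"
    by (simp add: matrix_mul_assoc)
  have "(Q ** Q2) ** (R2 ** R) = mat 1"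
  proof -
    have "(Q ** Q2) ** (R2 ** R) = Q ** (Q2 ** R2) ** R" by (simp add: matrix_mul_assoc)
    then show ?thesis using assms(1) h(1) by simp
  qed
  moreover have "(R2 ** R) ** (Q ** Q2) = mat 1"
  proof -
    have "(R2 ** R) ** (Q ** Q2) = R2 ** (R ** Q) ** Q2" by (simp add: matrix_mul_assoc)
    then show ?thesis using assms(2) h(2) by simp
  qed
  ultimately show ?thesis unfolding TP_def using h(3,4) e by metis
qed

lemma e1_row: "(G::'k::field^3^3)$1$2 = 0 \<Longrightarrow> G$1$3 = 0 \<Longrightarrow> axis 1 1 v* G = G$1$1 *s axis 1 1"
  by (simp add: vec_eq_iff forall_3 vm3 axis_def)

lemma dot_e1: "dotv (axis 1 1) (w::'k::field^3) = w$1"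
  by (simp add: dot3 axis_def)

lemma diag_commute:
  fixes Xm Y :: "'k::field^3^3"
  assumes "Xm$1$2 = 0 \<and> Xm$1$3 = 0 \<and> Xm$2$1 = 0 \<and> Xm$3$1 = 0 \<and> Xm$2$3 = 0 \<and> Xm$3$2 = 0 \<and> Xm$2$2 = Xm$3$3"
    "Y$1$2 = 0 \<and> Y$1$3 = 0 \<and> Y$2$1 = 0 \<and> Y$3$1 = 0 \<and> Y$2$3 = 0 \<and> Y$3$2 = 0 \<and> Y$2$2 = Y$3$3"
  shows "Xm ** Y = Y ** Xm"
  using assms by (simp add: mat3_eq mm3 mult.commute)

lemma lemma_T:
  fixes Xm Y C D :: "'k::alg_closed_field^3^3"
  assumes XC: "Xm ** C = C ** Xm" and XD: "Xm ** D = D ** Xm" and YC: "Y ** C = C ** Y"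
    and YD: "Y ** D = D ** Y" and XY: "Xm ** Y \<noteq> Y ** Xm"
  shows "TP C D"
proof -
  have ns: "\<forall>c. Xm \<noteq> mat c"
  proof
    fix c show "Xm \<noteq> mat c" using XY comm_mat[of Y c] by auto
  qed
  obtain u f where uf: "u \<noteq> 0" "f \<noteq> 0" "\<forall>Z. Z ** Xm = Xm ** Z \<longrightarrow> Z ** outer u f = outer u f ** Z"
    using rank1_commutant[OF ns] by blast
  have oC: "C ** outer u f = outer u f ** C" using uf(3) XC by simp
  have oD: "D ** outer u f = outer u f ** D" using uf(3) XD by simp
  obtain \<mu>1 \<nu>1 \<mu>2 \<nu>2 where ev: "C *v u = \<mu>1 *s u" "f v* C = \<nu>1 *s f" "D *v u = \<mu>2 *s u" "f v* D = \<nu>2 *s f"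
    using outer_common[OF uf(2) oC] outer_common_left[OF uf(1) oC]
      outer_common[OF uf(2) oD] outer_common_left[OF uf(1) oD] by blast
  show ?thesis
  proof (cases "dotv f u = 0")
    case True
    then show ?thesis using flag[OF uf(1,2) True ev] by blast
  next
    case False
    obtain Q :: "'k^3^3" where Q: "invertible Q" "\<forall>i. Q$i$1 = u$i" "(f v* Q)$2 = 0" "(f v* Q)$3 = 0"
      using Qex1[OF uf(2) False] by blast
    obtain R where R: "Q ** R = mat 1" "R ** Q = mat 1" using Q(1) unfolding invertible_def by blast
    have g1: "(f v* Q)$1 \<noteq> 0" using vQ_col1[OF Q(2)] False by simp
    have pat: "(R ** G ** Q)$1$2 = 0 \<and> (R ** G ** Q)$1$3 = 0 \<and> (R ** G ** Q)$2$1 = 0 \<and> (R ** G ** Q)$3$1 = 0"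
      if "G *v u = \<mu> *s u" "f v* G = \<nu> *s f" for G \<mu> \<nu>
      using conj_col1[OF R(2) Q(2) that(1)] row_e1[OF Q(3,4) g1 conj_row[OF R(1) that(2)]] by simp
    note pC = pat[OF ev(1,2)] and pD = pat[OF ev(3,4)]
    have cc: "(R ** A ** Q) ** (R ** B ** Q) = (R ** B ** Q) ** (R ** A ** Q)" if "A ** B = B ** A" for A B
      using that conj_mult[OF R(1)] by metis
    show ?thesis
    proof (cases "\<exists>w. w \<noteq> 0 \<and> w$1 = 0 \<and> (\<exists>a. (R ** C ** Q) *v w = a *s w) \<and> (\<exists>b. (R ** D ** Q) *v w = b *s w)")
      case True
      then obtain w a b where w: "w \<noteq> 0" "w$1 = 0" "(R ** C ** Q) *v w = a *s w" "(R ** D ** Q) *v w = b *s w"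
        by blast
      have f1: "axis 1 1 \<noteq> (0::'k^3)" by (simp add: axis_eq_0_iff)
      have d1: "dotv (axis 1 1) w = 0" using w(2) by (simp add: dot_e1)
      have r1: "axis 1 1 v* (R ** C ** Q) = (R ** C ** Q)$1$1 *s axis 1 1" using e1_row pC by blast
      have r2: "axis 1 1 v* (R ** D ** Q) = (R ** D ** Q)$1$1 *s axis 1 1" using e1_row pD by blast
      have "TP (R ** C ** Q) (R ** D ** Q)" using flag[OF w(1) f1 d1 w(3) r1 w(4) r2] .
      then show ?thesis using TP_conj[OF R] by blast
    next
      case False
      have dX: "(R ** Xm ** Q)$1$2 = 0 \<and> (R ** Xm ** Q)$1$3 = 0 \<and> (R ** Xm ** Q)$2$1 = 0 \<and> (R ** Xm ** Q)$3$1 = 0 \<and>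
          (R ** Xm ** Q)$2$3 = 0 \<and> (R ** Xm ** Q)$3$2 = 0 \<and> (R ** Xm ** Q)$2$2 = (R ** Xm ** Q)$3$3"
        using block_case[OF _ _ _ _ _ _ _ _ cc[OF XC] cc[OF XD] False] pC pD by blast
      have dY: "(R ** Y ** Q)$1$2 = 0 \<and> (R ** Y ** Q)$1$3 = 0 \<and> (R ** Y ** Q)$2$1 = 0 \<and> (R ** Y ** Q)$3$1 = 0 \<and>
          (R ** Y ** Q)$2$3 = 0 \<and> (R ** Y ** Q)$3$2 = 0 \<and> (R ** Y ** Q)$2$2 = (R ** Y ** Q)$3$3"
        using block_case[OF _ _ _ _ _ _ _ _ cc[OF YC] cc[OF YD] False] pC pD by blast
      have "R ** (Xm ** Y) ** Q = R ** (Y ** Xm) ** Q"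
        using diag_commute[OF dX dY] conj_mult[OF R(1)] by metis
      then have "Q ** (R ** (Xm ** Y) ** Q) ** R = Q ** (R ** (Y ** Xm) ** Q) ** R" by simp
      then have "Xm ** Y = Y ** Xm" unfolding unconj[OF R(1)] .
      then show ?thesis using XY by blast
    qed
  qed
qed



lemma fg_inv_inv[simp]: "fg_inv_letter (fg_inv_letter x) = x"
  by (simp add: fg_inv_letter_def)

lemma fg_inv_eq_iff[simp]: "fg_inv_letter x = fg_inv_letter y \<longleftrightarrow> x = y"
  by (cases x; cases y) (auto simp: fg_inv_letter_def)

lemma fg_reduced_succ: "fg_reduced xs = successively (\<lambda>x y. y \<noteq> fg_inv_letter x) xs"
  by (induction xs rule: fg_reduced.induct) auto

lemma fg_reduced_tl: "fg_reduced (y # ys) \<Longrightarrow> fg_reduced ys"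
  by (cases ys) auto

lemma fg_push_reduced: "fg_reduced w \<Longrightarrow> fg_reduced (fg_push x w)"
  by (cases w) (auto dest: fg_reduced_tl)

lemma fg_foldr_reduced: "fg_reduced v \<Longrightarrow> fg_reduced (foldr fg_push u v)"
  by (induction u) (auto intro: fg_push_reduced)

lemma fg_push_cancel: "fg_reduced w \<Longrightarrow> fg_push x (fg_push (fg_inv_letter x) w) = w"
proof (cases w)
  case Nil then show ?thesis by simp
next
  case (Cons y ys)
  assume r: "fg_reduced w"
  show ?thesis
  proof (cases "y = x")
    case True
    then show ?thesis using r Cons by (cases ys) auto
  next
    case False
    then show ?thesis using Cons by auto
  qed
qed

lemma fg_foldr_push: "fg_reduced r \<Longrightarrow> fg_reduced w \<Longrightarrow>
   foldr fg_push (fg_push x r) w = fg_push x (foldr fg_push r w)"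
proof (cases r)
  case Nil then show ?thesis by simp
next
  case (Cons y ys)
  assume rr: "fg_reduced r" and rw: "fg_reduced w"
  show ?thesis
  proof (cases "y = fg_inv_letter x")
    case True
    have "fg_reduced (foldr fg_push ys w)" using rw fg_foldr_reduced by blast
    then show ?thesis using True Cons fg_push_cancel[of "foldr fg_push ys w" x] by simp
  next
    case False then show ?thesis using Cons by simp
  qed
qed

lemma fg_assoc: "fg_reduced v \<Longrightarrow> fg_reduced w \<Longrightarrow>
  foldr fg_push (foldr fg_push u v) w = foldr fg_push u (foldr fg_push v w)"
proof (induction u)
  case Nil then show ?case by simp
next
  case (Cons x u)
  have "fg_reduced (foldr fg_push u v)" using Cons.prems fg_foldr_reduced by blast
  then show ?case using Cons fg_foldr_push by simp
qed

lemma fg_left_inv: "fg_reduced x \<Longrightarrow> foldr fg_push (rev (map fg_inv_letter x)) x = []"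
proof (induction x)
  case Nil then show ?case by simp
next
  case (Cons a x)
  have rx: "fg_reduced x" using Cons.prems fg_reduced_tl by blast
  have "foldr fg_push (rev (map fg_inv_letter (a # x))) (a # x)
      = foldr fg_push (rev (map fg_inv_letter x)) (fg_push (fg_inv_letter a) (a # x))"
    by simp
  also have "fg_push (fg_inv_letter a) (a # x) = x" by simp
  finally show ?case using Cons.IH rx by simp
qed

lemma fg_rev_inv_reduced: "fg_reduced x \<Longrightarrow> fg_reduced (rev (map fg_inv_letter x))"
  unfolding fg_reduced_succ successively_rev successively_map
  by (erule successively_mono) (metis fg_inv_inv)

lemma group_free_group2: "group free_group2"
proof (rule groupI)
  show "\<And>x y. x \<in> carrier free_group2 \<Longrightarrow> y \<in> carrier free_group2 \<Longrightarrow> x \<otimes>\<^bsub>free_group2\<^esub> y \<in> carrier free_group2"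
    by (auto simp: free_group2_def fg_foldr_reduced)
  show "\<one>\<^bsub>free_group2\<^esub> \<in> carrier free_group2" by (simp add: free_group2_def)
  show "\<And>x y z. x \<in> carrier free_group2 \<Longrightarrow> y \<in> carrier free_group2 \<Longrightarrow> z \<in> carrier free_group2 \<Longrightarrow>
    x \<otimes>\<^bsub>free_group2\<^esub> y \<otimes>\<^bsub>free_group2\<^esub> z = x \<otimes>\<^bsub>free_group2\<^esub> (y \<otimes>\<^bsub>free_group2\<^esub> z)"
    by (auto simp: free_group2_def fg_assoc)
  show "\<And>x. x \<in> carrier free_group2 \<Longrightarrow> \<one>\<^bsub>free_group2\<^esub> \<otimes>\<^bsub>free_group2\<^esub> x = x"
    by (simp add: free_group2_def)
  show "\<And>x. x \<in> carrier free_group2 \<Longrightarrow> \<exists>y\<in>carrier free_group2. y \<otimes>\<^bsub>free_group2\<^esub> x = \<one>\<^bsub>free_group2\<^esub>"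
    by (auto simp: free_group2_def intro!: bexI[of _ "rev (map fg_inv_letter _)"] fg_left_inv fg_rev_inv_reduced)
qed


lemma GL3_simps[simp]: "carrier GL3 = {A. invertible A}" "mult GL3 = (\<lambda>A B. A ** B)" "one GL3 = mat 1"
  by (simp_all add: GL3_def)

lemma group_GL3: "group (GL3 :: ('k::field^3^3) monoid)"
proof (rule groupI)
  show "x \<otimes>\<^bsub>GL3\<^esub> y \<in> carrier GL3" if "x \<in> carrier GL3" "y \<in> carrier GL3" for x y :: "'k^3^3"
    using that invertible_mult by auto
  show "\<one>\<^bsub>GL3\<^esub> \<in> (carrier GL3 :: ('k^3^3) set)"
    by (auto simp: invertible_def intro: exI[of _ "mat 1"])
  show "x \<otimes>\<^bsub>GL3\<^esub> y \<otimes>\<^bsub>GL3\<^esub> z = x \<otimes>\<^bsub>GL3\<^esub> (y \<otimes>\<^bsub>GL3\<^esub> z)" for x y z :: "'k^3^3"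
    by (simp add: matrix_mul_assoc)
  show "\<one>\<^bsub>GL3\<^esub> \<otimes>\<^bsub>GL3\<^esub> x = x" for x :: "'k^3^3" by simp
  show "\<exists>y\<in>carrier GL3. y \<otimes>\<^bsub>GL3\<^esub> x = \<one>\<^bsub>GL3\<^esub>" if "x \<in> carrier GL3" for x :: "'k^3^3"
  proof -
    have "invertible x" using that by simp
    then obtain y where "x ** y = mat 1" "y ** x = mat 1" unfolding invertible_def by blast
    then show ?thesis by (auto simp: invertible_def)
  qed
qed

lemma GL3_inv:
  assumes "(A::'k::field^3^3) \<in> carrier GL3"
  shows "A ** inv\<^bsub>GL3\<^esub> A = mat 1" "inv\<^bsub>GL3\<^esub> A ** A = mat 1" "inv\<^bsub>GL3\<^esub> A \<in> carrier GL3"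
  using group.r_inv[OF group_GL3 assms] group.l_inv[OF group_GL3 assms] group.inv_closed[OF group_GL3 assms]
  by simp_all

definition gcomm :: "('a, 'b) monoid_scheme \<Rightarrow> 'a \<Rightarrow> 'a \<Rightarrow> 'a" where
  "gcomm G a b = a \<otimes>\<^bsub>G\<^esub> b \<otimes>\<^bsub>G\<^esub> inv\<^bsub>G\<^esub> a \<otimes>\<^bsub>G\<^esub> inv\<^bsub>G\<^esub> b"

definition glaw :: "('a, 'b) monoid_scheme \<Rightarrow> 'a \<Rightarrow> 'a \<Rightarrow> 'a" where
  "glaw G p q = gcomm G (gcomm G (gcomm G p q) (gcomm G (inv\<^bsub>G\<^esub> p) q))
                        (gcomm G (gcomm G p (inv\<^bsub>G\<^esub> q)) (gcomm G (inv\<^bsub>G\<^esub> p) (inv\<^bsub>G\<^esub> q)))"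

lemma (in group_hom) hom_gcomm:
  "a \<in> carrier G \<Longrightarrow> b \<in> carrier G \<Longrightarrow> h (gcomm G a b) = gcomm H (h a) (h b)"
  by (simp add: gcomm_def)

lemma (in group) gcomm_closed: "a \<in> carrier G \<Longrightarrow> b \<in> carrier G \<Longrightarrow> gcomm G a b \<in> carrier G"
  by (simp add: gcomm_def)

lemma (in group_hom) hom_glaw:
  "a \<in> carrier G \<Longrightarrow> b \<in> carrier G \<Longrightarrow> h (glaw G a b) = glaw H (h a) (h b)"
  by (simp add: glaw_def hom_gcomm G.gcomm_closed)

lemma GL3_gcomm: "gcomm GL3 a b = a ** b ** inv\<^bsub>GL3\<^esub> a ** inv\<^bsub>GL3\<^esub> b"
  by (simp add: gcomm_def)

lemma ut_law:
  fixes P Q :: "'k::field^3^3"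
  assumes "P \<in> carrier GL3" "Q \<in> carrier GL3" "ut P" "ut Q"
  shows "glaw GL3 P Q = mat 1"
proof -
  interpret GL: group "GL3 :: ('k^3^3) monoid" by (rule group_GL3)
  have utinv: "ut (inv\<^bsub>GL3\<^esub> A)" if "A \<in> carrier GL3" "ut A" for A :: "'k^3^3"
    using ut_inv[OF that(2) GL3_inv(1)[OF that(1)]] by blast
  have l1: "uni (gcomm GL3 A B)" if "A \<in> carrier GL3" "B \<in> carrier GL3" "ut A" "ut B" for A B :: "'k^3^3"
    unfolding GL3_gcomm using ut_comm_uni[OF that(3,4) GL3_inv(1)[OF that(1)] GL3_inv(1)[OF that(2)]] .
  have l2: "cen (gcomm GL3 A B)" if "A \<in> carrier GL3" "B \<in> carrier GL3" "uni A" "uni B" for A B :: "'k^3^3"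
    unfolding GL3_gcomm using uni_comm_cen[OF that(3,4) GL3_inv(1)[OF that(1)] GL3_inv(1)[OF that(2)]] .
  have l3: "gcomm GL3 A B = mat 1" if "A \<in> carrier GL3" "B \<in> carrier GL3" "cen A" "cen B" for A B :: "'k^3^3"
    unfolding GL3_gcomm using cen_comm_one[OF that(3,4) GL3_inv(1)[OF that(1)] GL3_inv(1)[OF that(2)]] .
  have ip: "inv\<^bsub>GL3\<^esub> P \<in> carrier GL3" "ut (inv\<^bsub>GL3\<^esub> P)" using assms utinv GL3_inv(3) by auto
  have iq: "inv\<^bsub>GL3\<^esub> Q \<in> carrier GL3" "ut (inv\<^bsub>GL3\<^esub> Q)" using assms utinv GL3_inv(3) by auto
  show ?thesis unfolding glaw_def
    using assms ip iq
    by (intro l3 l2 l1 GL.gcomm_closed) auto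
qed


lemma TP_law:
  fixes C D :: "'k::field^3^3"
  assumes "C \<in> carrier GL3" "D \<in> carrier GL3" "TP C D"
  shows "glaw GL3 C D = mat 1"
proof -
  obtain Q R where QR: "Q ** R = mat 1" "R ** Q = mat 1" "ut (R ** C ** Q)" "ut (R ** D ** Q)"
    using assms(3) unfolding TP_def by blast
  have iQ: "invertible Q" "invertible R" using QR(1,2) unfolding invertible_def by blast+
  define \<psi> where "\<psi> = (\<lambda>M::'k^3^3. R ** M ** Q)"
  have hom: "\<psi> \<in> hom GL3 GL3"
    by (rule homI) (auto simp: \<psi>_def iQ invertible_mult conj_mult[OF QR(1)])
  interpret gh: group_hom "GL3 :: ('k^3^3) monoid" GL3 \<psi>
    by (simp add: group_hom_def group_hom_axioms_def group_GL3 hom)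
  have cC: "\<psi> C \<in> carrier GL3" "\<psi> D \<in> carrier GL3" using hom assms(1,2) by (auto simp: hom_def)
  have "\<psi> (glaw GL3 C D) = glaw GL3 (\<psi> C) (\<psi> D)" using gh.hom_glaw assms(1,2) by blast
  also have "\<dots> = mat 1" using ut_law[OF cC] QR(3,4) by (simp add: \<psi>_def)
  finally have "R ** glaw GL3 C D ** Q = mat 1" by (simp add: \<psi>_def)
  then have "Q ** (R ** glaw GL3 C D ** Q) ** R = Q ** mat 1 ** R" by simp
  then show ?thesis using unconj[OF QR(1)] QR(1) by simp
qed

lemma F2_mult: "x \<otimes>\<^bsub>free_group2\<^esub> y = foldr fg_push x y"
  by (simp add: free_group2_def)

lemma F2_carrier: "x \<in> carrier free_group2 \<longleftrightarrow> fg_reduced x"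
  by (simp add: free_group2_def)

lemma F2_one: "\<one>\<^bsub>free_group2\<^esub> = []"
  by (simp add: free_group2_def)

lemma F2_inv: "fg_reduced w \<Longrightarrow> inv\<^bsub>free_group2\<^esub> w = rev (map fg_inv_letter w)"
  by (rule group.inv_equality[OF group_free_group2])
     (simp_all add: F2_mult F2_carrier F2_one fg_left_inv fg_rev_inv_reduced)

lemma F2_law: "glaw free_group2 [(False, False)] [(True, False)] \<noteq> []"
  by (simp add: glaw_def gcomm_def F2_mult F2_inv fg_inv_letter_def)


abbreviation "FF \<equiv> free_group2 \<times>\<times> free_group2"

lemma group_FF: "group FF"
  using DirProd_group[OF group_free_group2 group_free_group2] .

lemma (in group) glaw_closed: "a \<in> carrier G \<Longrightarrow> b \<in> carrier G \<Longrightarrow> glaw G a b \<in> carrier G"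
  by (simp add: glaw_def gcomm_closed)

lemma fg_foldr_nil: "fg_reduced u \<Longrightarrow> foldr fg_push u [] = u"
proof (induction u)
  case Nil then show ?case by simp
next
  case (Cons x u)
  then have "foldr fg_push u [] = u" using fg_reduced_tl by blast
  then show ?case using Cons.prems by (cases u) auto
qed

lemma core:
  fixes \<Phi> :: "fg_letter list \<times> fg_letter list \<Rightarrow> 'k::alg_closed_field^3^3"
  assumes hom: "\<Phi> \<in> hom FF GL3" and inj: "inj_on \<Phi> (carrier FF)"
  shows False
proof -
  interpret gh: group_hom FF "GL3 :: ('k^3^3) monoid" \<Phi>
    by (simp add: group_hom_def group_hom_axioms_def group_GL3 group_FF hom)
  define x :: "fg_letter list" where "x = [(False, False)]"
  define y :: "fg_letter list" where "y = [(True, False)]"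
  have xy: "x \<in> carrier free_group2" "y \<in> carrier free_group2" by (simp_all add: x_def y_def F2_carrier)
  define a where "a = (x, [] :: fg_letter list)"
  define b where "b = (y, [] :: fg_letter list)"
  define c where "c = ([] :: fg_letter list, x)"
  define d where "d = ([] :: fg_letter list, y)"
  have car: "a \<in> carrier FF" "b \<in> carrier FF" "c \<in> carrier FF" "d \<in> carrier FF"
    using xy by (auto simp: a_def b_def c_def d_def F2_carrier)
  have comm: "p \<otimes>\<^bsub>FF\<^esub> q = q \<otimes>\<^bsub>FF\<^esub> p" if "p \<in> {a, b}" "q \<in> {c, d}" for p q
    using that xy by (auto simp: a_def b_def c_def d_def F2_mult F2_carrier fg_foldr_nil)
  have nc: "a \<otimes>\<^bsub>FF\<^esub> b \<noteq> b \<otimes>\<^bsub>FF\<^esub> a"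
    by (simp add: a_def b_def x_def y_def F2_mult fg_inv_letter_def)
  define j :: "fg_letter list \<Rightarrow> fg_letter list \<times> fg_letter list" where "j = (\<lambda>w. ([], w))"
  have jhom: "j \<in> hom free_group2 FF"
    by (rule homI) (auto simp: j_def F2_carrier F2_mult)
  interpret jh: group_hom free_group2 FF j
    by (simp add: group_hom_def group_hom_axioms_def group_FF group_free_group2 jhom)
  have lawcd: "glaw FF c d \<noteq> \<one>\<^bsub>FF\<^esub>"
  proof -
    have "glaw FF c d = j (glaw free_group2 x y)"
      using jh.hom_glaw[OF xy] by (simp add: j_def c_def d_def)
    then show ?thesis using F2_law by (simp add: j_def x_def y_def F2_one)
  qed
  define A where "A = \<Phi> a"
  define B where "B = \<Phi> b"
  define C where "C = \<Phi> c"
  define D where "D = \<Phi> d"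
  have mc: "\<Phi> p ** \<Phi> q = \<Phi> q ** \<Phi> p" if "p \<in> {a, b}" "q \<in> {c, d}" for p q
  proof -
    have "p \<in> carrier FF" "q \<in> carrier FF" using that car by auto
    then show ?thesis using comm[OF that] gh.hom_mult by (metis GL3_simps(2))
  qed
  have AB: "A ** B \<noteq> B ** A"
  proof
    assume "A ** B = B ** A"
    then have "\<Phi> (a \<otimes>\<^bsub>FF\<^esub> b) = \<Phi> (b \<otimes>\<^bsub>FF\<^esub> a)"
      using gh.hom_mult car by (simp add: A_def B_def)
    then show False using inj nc car by (meson inj_onD group.subgroup_self group_FF subgroup.m_closed)
  qed
  have m1: "A ** C = C ** A" using mc[of a c] by (simp add: A_def C_def)
  have m2: "A ** D = D ** A" using mc[of a d] by (simp add: A_def D_def)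
  have m3: "B ** C = C ** B" using mc[of b c] by (simp add: B_def C_def)
  have m4: "B ** D = D ** B" using mc[of b d] by (simp add: B_def D_def)
  have "TP C D" using lemma_T[of A C D B] m1 m2 m3 m4 AB by metis
  moreover have "C \<in> carrier GL3" "D \<in> carrier GL3"
    using hom_in_carrier[OF hom car(3)] hom_in_carrier[OF hom car(4)] by (simp_all add: C_def D_def)
  ultimately have "glaw GL3 C D = mat 1" using TP_law by blast
  then have "\<Phi> (glaw FF c d) = \<Phi> \<one>\<^bsub>FF\<^esub>"
    using gh.hom_glaw[OF car(3,4)] gh.hom_one by (simp add: C_def D_def)
  moreover have "glaw FF c d \<in> carrier FF" using group.glaw_closed[OF group_FF car(3,4)] .
  ultimately have "glaw FF c d = \<one>\<^bsub>FF\<^esub>" using inj monoid.one_closed[OF group.is_monoid[OF group_FF]] by (meson inj_onD)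
  then show False using lawcd by blast
qed


definition acm :: "'a::field^3^3 \<Rightarrow> 'a alg_closure^3^3" where
  "acm A = map_matrix to_ac A"

lemma acm_mult: "acm (A ** B) = acm A ** acm B"
  by (simp add: acm_def vec_eq_iff matrix_matrix_mult_def to_ac_sum)

lemma acm_one: "acm (mat 1) = mat 1"
  by (simp add: acm_def vec_eq_iff mat_def)

lemma acm_inj: "inj acm"
  by (rule injI) (simp add: acm_def vec_eq_iff)

lemma acm_hom: "acm \<in> hom GL3 GL3"
proof (rule homI)
  fix A :: "'a::field^3^3" assume "A \<in> carrier GL3"
  then obtain A' where "A ** A' = mat 1" "A' ** A = mat 1" by (auto simp: invertible_def)
  then have "acm A ** acm A' = mat 1" "acm A' ** acm A = mat 1" by (metis acm_mult acm_one)+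
  then show "acm A \<in> carrier GL3" by (auto simp: invertible_def)
next
  fix A B :: "'a::field^3^3"
  show "acm (A \<otimes>\<^bsub>GL3\<^esub> B) = acm A \<otimes>\<^bsub>GL3\<^esub> acm B" by (simp add: acm_mult)
qed

theorem corollary2p4:
  fixes G :: "('g, 'm) monoid_scheme"
  assumes "group G"
    and "\<exists>H. subgroup H G \<and> G\<lparr>carrier := H\<rparr> \<cong> free_group2 \<times>\<times> free_group2"
  shows "\<not> (\<exists>h. h \<in> hom G (GL3 :: ('a::field ^ 3 ^ 3) monoid) \<and> inj_on h (carrier G))"
proof
  assume "\<exists>h. h \<in> hom G (GL3 :: ('a::field ^ 3 ^ 3) monoid) \<and> inj_on h (carrier G)"
  then obtain h where h: "h \<in> hom G (GL3 :: ('a::field ^ 3 ^ 3) monoid)" "inj_on h (carrier G)" by blast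
  obtain H where H: "subgroup H G" "G\<lparr>carrier := H\<rparr> \<cong> FF" using assms(2) by blast
  obtain g where g: "g \<in> iso (G\<lparr>carrier := H\<rparr>) FF" using H(2) unfolding is_iso_def by blast
  have gH: "group (G\<lparr>carrier := H\<rparr>)" using subgroup.subgroup_is_group[OF H(1) assms(1)] .
  define g' where "g' = inv_into (carrier (G\<lparr>carrier := H\<rparr>)) g"
  have g': "g' \<in> iso FF (G\<lparr>carrier := H\<rparr>)" unfolding g'_def using group.iso_set_sym[OF gH g] .
  have Hsub: "H \<subseteq> carrier G" using subgroup.subset[OF H(1)] .
  have hH: "h \<in> hom (G\<lparr>carrier := H\<rparr>) GL3"
    using h(1) Hsub unfolding hom_def by auto
  have g'hom: "g' \<in> hom FF (G\<lparr>carrier := H\<rparr>)" using g' by (simp add: iso_def)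
  have g'bij: "bij_betw g' (carrier FF) H" using g' by (simp add: iso_def)
  define \<Phi> where "\<Phi> = acm \<circ> (h \<circ> g')"
  have "\<Phi> \<in> hom FF GL3"
    unfolding \<Phi>_def by (rule hom_compose[OF hom_compose[OF g'hom hH] acm_hom])
  moreover have "inj_on \<Phi> (carrier FF)"
  proof -
    have "inj_on (h \<circ> g') (carrier FF)"
      using g'bij h(2) Hsub by (auto simp: bij_betw_def intro!: comp_inj_on intro: inj_on_subset)
    then show ?thesis unfolding \<Phi>_def using acm_inj by (auto intro!: comp_inj_on intro: inj_on_subset)
  qed
  ultimately show False using core by blast
qed

end
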